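(* Let $\{A_\nu\mid\nu\in\Lambda\}$ be a family of locally $C^{\ast}$-algebras. The Cartesian product $A=\prod_{\nu\in\Lambda}A_\nu$ with the product topology is an annihilator algebra if and only if every $A_\nu$ is an annihilator algebra.
   Context: Locally $C^{\ast}$-algebra: complete Hausdorff locally convex ${}^{\ast}$-algebra over $\mathbb{C}$ with jointly continuous multiplication, topology given by $C^{\ast}$-seminorms. Annihilator algebra: for every closed left ideal $J$ and closed right ideal $K$, $\mathrm{ran}(J)=0\iff J=A$ and $\mathrm{lan}(K)=0\iff K=A$, where $\mathrm{lan},\mathrm{ran}$ are left/right annihilators. *)

theory Defs
  imports Complex_Main "HOL-Library.FuncSet"
begin

text \<open>A (candidate) locally C*-algebra is given by a carrier set inside an ambient type,
  explicit *-algebra operations over the complex numbers, and the family of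
  seminorms defining its topology.\<close>

record 'a lcalg =
  carr :: "'a set"
  zer  :: "'a"
  ad   :: "'a \<Rightarrow> 'a \<Rightarrow> 'a"
  ng   :: "'a \<Rightarrow> 'a"
  sm   :: "complex \<Rightarrow> 'a \<Rightarrow> 'a"
  mul  :: "'a \<Rightarrow> 'a \<Rightarrow> 'a"
  st   :: "'a \<Rightarrow> 'a"
  sn   :: "('a \<Rightarrow> real) set"

definition sub :: "'a lcalg \<Rightarrow> 'a \<Rightarrow> 'a \<Rightarrow> 'a" where
  "sub A x y = ad A x (ng A y)"

definition star_algebra :: "'a lcalg \<Rightarrow> bool" where
  "star_algebra A \<longleftrightarrow>
     zer A \<in> carr A \<and>
     (\<forall>x\<in>carr A. \<forall>y\<in>carr A. ad A x y \<in> carr A \<and> mul A x y \<in> carr A) \<and>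
     (\<forall>x\<in>carr A. ng A x \<in> carr A \<and> st A x \<in> carr A \<and> (\<forall>a. sm A a x \<in> carr A)) \<and>
     (\<forall>x\<in>carr A. \<forall>y\<in>carr A. \<forall>z\<in>carr A. ad A (ad A x y) z = ad A x (ad A y z)) \<and>
     (\<forall>x\<in>carr A. \<forall>y\<in>carr A. ad A x y = ad A y x) \<and>
     (\<forall>x\<in>carr A. ad A x (zer A) = x \<and> ad A x (ng A x) = zer A) \<and>
     (\<forall>a. \<forall>x\<in>carr A. \<forall>y\<in>carr A. sm A a (ad A x y) = ad A (sm A a x) (sm A a y)) \<and>
     (\<forall>a b. \<forall>x\<in>carr A. sm A (a + b) x = ad A (sm A a x) (sm A b x)) \<and>
     (\<forall>a b. \<forall>x\<in>carr A. sm A (a * b) x = sm A a (sm A b x)) \<and>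
     (\<forall>x\<in>carr A. sm A 1 x = x) \<and>
     (\<forall>x\<in>carr A. \<forall>y\<in>carr A. \<forall>z\<in>carr A. mul A (mul A x y) z = mul A x (mul A y z)) \<and>
     (\<forall>x\<in>carr A. \<forall>y\<in>carr A. \<forall>z\<in>carr A.
        mul A x (ad A y z) = ad A (mul A x y) (mul A x z) \<and>
        mul A (ad A x y) z = ad A (mul A x z) (mul A y z)) \<and>
     (\<forall>a. \<forall>x\<in>carr A. \<forall>y\<in>carr A.
        sm A a (mul A x y) = mul A (sm A a x) y \<and> sm A a (mul A x y) = mul A x (sm A a y)) \<and>
     (\<forall>x\<in>carr A. \<forall>y\<in>carr A. st A (ad A x y) = ad A (st A x) (st A y)) \<and>
     (\<forall>a. \<forall>x\<in>carr A. st A (sm A a x) = sm A (cnj a) (st A x)) \<and>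
     (\<forall>x\<in>carr A. \<forall>y\<in>carr A. st A (mul A x y) = mul A (st A y) (st A x)) \<and>
     (\<forall>x\<in>carr A. st A (st A x) = x)"

definition cstar_seminorm :: "'a lcalg \<Rightarrow> ('a \<Rightarrow> real) \<Rightarrow> bool" where
  "cstar_seminorm A p \<longleftrightarrow>
     (\<forall>x\<in>carr A. 0 \<le> p x) \<and>
     (\<forall>x\<in>carr A. \<forall>y\<in>carr A. p (ad A x y) \<le> p x + p y) \<and>
     (\<forall>a. \<forall>x\<in>carr A. p (sm A a x) = norm a * p x) \<and>
     (\<forall>x\<in>carr A. \<forall>y\<in>carr A. p (mul A x y) \<le> p x * p y) \<and>
     (\<forall>x\<in>carr A. p (mul A (st A x) x) = (p x)\<^sup>2)"

definition sn_closed :: "'a lcalg \<Rightarrow> 'a set \<Rightarrow> bool" where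
  "sn_closed A S \<longleftrightarrow> S \<subseteq> carr A \<and>
     (\<forall>x\<in>carr A. (\<forall>F. finite F \<longrightarrow> F \<subseteq> sn A \<longrightarrow> (\<forall>e>0. \<exists>y\<in>S. \<forall>p\<in>F. p (sub A x y) < e))
        \<longrightarrow> x \<in> S)"

definition sn_hausdorff :: "'a lcalg \<Rightarrow> bool" where
  "sn_hausdorff A \<longleftrightarrow> (\<forall>x\<in>carr A. (\<forall>p\<in>sn A. p x = 0) \<longrightarrow> x = zer A)"

text \<open>Completeness: every Cauchy filter on the carrier converges (equivalently, every Cauchy net
  converges).\<close>
definition sn_cauchy :: "'a lcalg \<Rightarrow> 'a filter \<Rightarrow> bool" where
  "sn_cauchy A F \<longleftrightarrow> F \<noteq> bot \<and> eventually (\<lambda>x. x \<in> carr A) F \<and>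
     (\<forall>p\<in>sn A. \<forall>e>0. eventually (\<lambda>(x, y). p (sub A x y) < e) (prod_filter F F))"

definition sn_converges :: "'a lcalg \<Rightarrow> 'a filter \<Rightarrow> 'a \<Rightarrow> bool" where
  "sn_converges A F x \<longleftrightarrow> (\<forall>p\<in>sn A. \<forall>e>0. eventually (\<lambda>y. p (sub A y x) < e) F)"

definition sn_complete :: "'a lcalg \<Rightarrow> bool" where
  "sn_complete A \<longleftrightarrow> (\<forall>F. sn_cauchy A F \<longrightarrow> (\<exists>x\<in>carr A. sn_converges A F x))"

definition locally_cstar_algebra :: "'a lcalg \<Rightarrow> bool" where
  "locally_cstar_algebra A \<longleftrightarrow> star_algebra A \<and> (\<forall>p\<in>sn A. cstar_seminorm A p) \<and>
     sn_hausdorff A \<and> sn_complete A"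

definition subspace_of :: "'a lcalg \<Rightarrow> 'a set \<Rightarrow> bool" where
  "subspace_of A J \<longleftrightarrow> J \<subseteq> carr A \<and> zer A \<in> J \<and>
     (\<forall>x\<in>J. \<forall>y\<in>J. ad A x y \<in> J) \<and> (\<forall>a. \<forall>x\<in>J. sm A a x \<in> J)"

definition left_ideal :: "'a lcalg \<Rightarrow> 'a set \<Rightarrow> bool" where
  "left_ideal A J \<longleftrightarrow> subspace_of A J \<and> (\<forall>a\<in>carr A. \<forall>x\<in>J. mul A a x \<in> J)"

definition right_ideal :: "'a lcalg \<Rightarrow> 'a set \<Rightarrow> bool" where
  "right_ideal A J \<longleftrightarrow> subspace_of A J \<and> (\<forall>a\<in>carr A. \<forall>x\<in>J. mul A x a \<in> J)"

definition lan :: "'a lcalg \<Rightarrow> 'a set \<Rightarrow> 'a set" where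
  "lan A S = {x \<in> carr A. \<forall>s\<in>S. mul A x s = zer A}"

definition ran :: "'a lcalg \<Rightarrow> 'a set \<Rightarrow> 'a set" where
  "ran A S = {x \<in> carr A. \<forall>s\<in>S. mul A s x = zer A}"

definition annihilator_algebra :: "'a lcalg \<Rightarrow> bool" where
  "annihilator_algebra A \<longleftrightarrow>
     (\<forall>J. left_ideal A J \<and> sn_closed A J \<longrightarrow> (ran A J = {zer A} \<longleftrightarrow> J = carr A)) \<and>
     (\<forall>K. right_ideal A K \<and> sn_closed A K \<longrightarrow> (lan A K = {zer A} \<longleftrightarrow> K = carr A))"

definition prod_alg :: "'i set \<Rightarrow> ('i \<Rightarrow> 'a lcalg) \<Rightarrow> ('i \<Rightarrow> 'a) lcalg" where
  "prod_alg I A = \<lparr>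
     carr = (\<Pi>\<^sub>E i\<in>I. carr (A i)),
     zer = (\<lambda>i\<in>I. zer (A i)),
     ad = (\<lambda>f g. \<lambda>i\<in>I. ad (A i) (f i) (g i)),
     ng = (\<lambda>f. \<lambda>i\<in>I. ng (A i) (f i)),
     sm = (\<lambda>a f. \<lambda>i\<in>I. sm (A i) a (f i)),
     mul = (\<lambda>f g. \<lambda>i\<in>I. mul (A i) (f i) (g i)),
     st = (\<lambda>f. \<lambda>i\<in>I. st (A i) (f i)),
     sn = {(\<lambda>f. p (f i)) | i p. i \<in> I \<and> p \<in> sn (A i)} \<rparr>"

end

theory Submission imports Defs begin

context fixes B :: "'a lcalg" assumes SA: "star_algebra B" begin
lemma zer_in: "zer B \<in> carr B" using SA unfolding star_algebra_def by auto
lemma ad_in: "x \<in> carr B \<Longrightarrow> y \<in> carr B \<Longrightarrow> ad B x y \<in> carr B" using SA unfolding star_algebra_def by auto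
lemma mul_in: "x \<in> carr B \<Longrightarrow> y \<in> carr B \<Longrightarrow> mul B x y \<in> carr B" using SA unfolding star_algebra_def by auto
lemma ng_in: "x \<in> carr B \<Longrightarrow> ng B x \<in> carr B" using SA unfolding star_algebra_def by auto
lemma st_in: "x \<in> carr B \<Longrightarrow> st B x \<in> carr B" using SA unfolding star_algebra_def by auto
lemma sm_in: "x \<in> carr B \<Longrightarrow> sm B a x \<in> carr B" using SA unfolding star_algebra_def by auto
lemma ad_assoc: "x \<in> carr B \<Longrightarrow> y \<in> carr B \<Longrightarrow> z \<in> carr B \<Longrightarrow> ad B (ad B x y) z = ad B x (ad B y z)" using SA unfolding star_algebra_def by auto
lemma ad_comm: "x \<in> carr B \<Longrightarrow> y \<in> carr B \<Longrightarrow> ad B x y = ad B y x" using SA unfolding star_algebra_def by auto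
lemma ad_zer: "x \<in> carr B \<Longrightarrow> ad B x (zer B) = x" using SA unfolding star_algebra_def by auto
lemma ad_ng: "x \<in> carr B \<Longrightarrow> ad B x (ng B x) = zer B" using SA unfolding star_algebra_def by auto
lemma sm_add: "x \<in> carr B \<Longrightarrow> sm B (a + b) x = ad B (sm B a x) (sm B b x)" using SA unfolding star_algebra_def by auto
lemma sm_mult: "x \<in> carr B \<Longrightarrow> sm B (a * b) x = sm B a (sm B b x)" using SA unfolding star_algebra_def by auto
lemma mul_sm1: "x \<in> carr B \<Longrightarrow> y \<in> carr B \<Longrightarrow> sm B a (mul B x y) = mul B (sm B a x) y" using SA unfolding star_algebra_def by auto
lemma mul_sm12: "\<forall>a. \<forall>x\<in>carr B. \<forall>y\<in>carr B.
        sm B a (mul B x y) = mul B (sm B a x) y \<and> sm B a (mul B x y) = mul B x (sm B a y)"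
  using SA unfolding star_algebra_def by (elim conjE) assumption
lemma mul_sm2: "x \<in> carr B \<Longrightarrow> y \<in> carr B \<Longrightarrow> sm B a (mul B x y) = mul B x (sm B a y)" using mul_sm12 by blast
lemma st_sm: "x \<in> carr B \<Longrightarrow> st B (sm B a x) = sm B (cnj a) (st B x)" using SA unfolding star_algebra_def by auto
lemma st_st: "x \<in> carr B \<Longrightarrow> st B (st B x) = x" using SA unfolding star_algebra_def by auto

lemma mul_assoc: "x \<in> carr B \<Longrightarrow> y \<in> carr B \<Longrightarrow> z \<in> carr B \<Longrightarrow> mul B (mul B x y) z = mul B x (mul B y z)" using SA unfolding star_algebra_def by auto

lemma sm0: assumes x: "x \<in> carr B" shows "sm B 0 x = zer B"
proof -
  define u where "u = sm B 0 x"
  have u: "u \<in> carr B" using x by (simp add: u_def sm_in)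
  have uu: "u = ad B u u" using sm_add[OF x, of 0 0] by (simp add: u_def)
  have "zer B = ad B u (ng B u)" using ad_ng[OF u] by simp
  also have "\<dots> = ad B (ad B u u) (ng B u)" using uu by simp
  also have "\<dots> = ad B u (ad B u (ng B u))" using ad_assoc u ng_in by blast
  also have "\<dots> = u" using ad_ng[OF u] ad_zer[OF u] by simp
  finally show ?thesis by (simp add: u_def)
qed

lemma sm_zer: "sm B a (zer B) = zer B"
proof -
  have "sm B a (zer B) = sm B a (sm B 0 (zer B))" using sm0 zer_in by simp
  also have "\<dots> = sm B (a*0) (zer B)" by (metis sm_mult zer_in)
  finally show ?thesis using sm0 zer_in by simp
qed

lemma mul_zer_r: assumes x: "x \<in> carr B" shows "mul B x (zer B) = zer B"
proof -
  have "mul B x (zer B) = mul B x (sm B 0 (zer B))" using sm0 zer_in by simp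
  also have "\<dots> = sm B 0 (mul B x (zer B))" using mul_sm2 x zer_in by simp
  finally show ?thesis using sm0 mul_in x zer_in by simp
qed

lemma mul_zer_l: assumes x: "x \<in> carr B" shows "mul B (zer B) x = zer B"
proof -
  have "mul B (zer B) x = mul B (sm B 0 (zer B)) x" using sm0 zer_in by simp
  also have "\<dots> = sm B 0 (mul B (zer B) x)" using mul_sm1 x zer_in by simp
  finally show ?thesis using sm0 mul_in x zer_in by simp
qed

lemma st_zer: "st B (zer B) = zer B"
proof -
  have "st B (zer B) = st B (sm B 0 (zer B))" using sm0 zer_in by simp
  also have "\<dots> = sm B 0 (st B (zer B))" using st_sm zer_in by simp
  finally show ?thesis using sm0 st_in zer_in by simp
qed

lemma ad_zer_l: "x \<in> carr B \<Longrightarrow> ad B (zer B) x = x" using ad_comm ad_zer zer_in by metis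

lemma sub_self: "x \<in> carr B \<Longrightarrow> sub B x x = zer B" by (simp add: sub_def ad_ng)
end

definition good :: "'a lcalg \<Rightarrow> bool" where
  "good B \<longleftrightarrow> star_algebra B \<and> (\<forall>w\<in>carr B. mul B (st B w) w = zer B \<longrightarrow> w = zer B)
     \<and> (\<forall>w\<in>carr B. mul B w (st B w) = zer B \<longrightarrow> w = zer B) \<and> (\<forall>p\<in>sn B. p (zer B) = 0)"

lemma lc_good: assumes "locally_cstar_algebra B" shows "good B"
proof -
  have SA: "star_algebra B" and CS: "\<forall>p\<in>sn B. cstar_seminorm B p" and H: "sn_hausdorff B"
    using assms by (auto simp: locally_cstar_algebra_def)
  have pz: "\<forall>p\<in>sn B. p (zer B) = 0"
  proof
    fix p assume "p \<in> sn B"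
    then have "cstar_seminorm B p" using CS by blast
    then have "p (sm B 0 (zer B)) = norm (0::complex) * p (zer B)" using zer_in[OF SA] unfolding cstar_seminorm_def by blast
    then have "p (sm B 0 (zer B)) = 0" by simp
    then show "p (zer B) = 0" using sm0[OF SA zer_in[OF SA]] by simp
  qed
  have L1: "\<forall>w\<in>carr B. mul B (st B w) w = zer B \<longrightarrow> w = zer B"
  proof (intro ballI impI)
    fix w assume w: "w \<in> carr B" and m: "mul B (st B w) w = zer B"
    have "\<forall>p\<in>sn B. p w = 0"
    proof
      fix p assume p: "p \<in> sn B"
      have "(p w)^2 = p (mul B (st B w) w)" using CS p w by (simp add: cstar_seminorm_def)
      then have "(p w)^2 = 0" using m pz p by simp
      then show "p w = 0" by simp
    qed
    then show "w = zer B" using H w by (simp add: sn_hausdorff_def)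
  qed
  have L2: "\<forall>w\<in>carr B. mul B w (st B w) = zer B \<longrightarrow> w = zer B"
  proof (intro ballI impI)
    fix w assume w: "w \<in> carr B" and m: "mul B w (st B w) = zer B"
    have "mul B (st B (st B w)) (st B w) = zer B" using m st_st[OF SA w] by simp
    then have "st B w = zer B" using L1 st_in[OF SA w] by blast
    then have "st B (st B w) = zer B" using st_zer[OF SA] by simp
    then show "w = zer B" using st_st[OF SA w] by simp
  qed
  show ?thesis using SA pz L1 L2 by (simp add: good_def)
qed

definition opp :: "'a lcalg \<Rightarrow> 'a lcalg" where
  "opp B = B\<lparr>mul := (\<lambda>x y. mul B y x)\<rparr>"

lemma opp_simps[simp]: "carr (opp B) = carr B" "zer (opp B) = zer B" "ad (opp B) = ad B"
  "ng (opp B) = ng B" "sm (opp B) = sm B" "st (opp B) = st B" "sn (opp B) = sn B"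
  "mul (opp B) x y = mul B y x"
  by (simp_all add: opp_def)

lemma opp_sa: assumes SA: "star_algebra B" shows "star_algebra (opp B)"
proof -
  have D: "\<forall>x\<in>carr B. \<forall>y\<in>carr B. \<forall>z\<in>carr B.
        mul B x (ad B y z) = ad B (mul B x y) (mul B x z) \<and>
        mul B (ad B x y) z = ad B (mul B x z) (mul B y z)"
    using SA unfolding star_algebra_def by (elim conjE) assumption
  have S: "\<forall>x\<in>carr B. \<forall>y\<in>carr B. st B (mul B x y) = mul B (st B y) (st B x)"
    using SA unfolding star_algebra_def by (elim conjE) assumption
  have h1: "\<forall>x\<in>carr B. \<forall>y\<in>carr B. ad B x y \<in> carr B \<and> mul B y x \<in> carr B"
    using ad_in[OF SA] mul_in[OF SA] by blast
  have h2: "\<forall>x\<in>carr B. \<forall>y\<in>carr B. \<forall>z\<in>carr B. mul B z (mul B y x) = mul B (mul B z y) x"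
    by (auto simp: mul_assoc[OF SA])
  have h3: "\<forall>x\<in>carr B. \<forall>y\<in>carr B. \<forall>z\<in>carr B. mul B (ad B y z) x = ad B (mul B y x) (mul B z x) \<and> mul B z (ad B x y) = ad B (mul B z x) (mul B z y)"
    using D by blast
  have h4: "\<forall>a. \<forall>x\<in>carr B. \<forall>y\<in>carr B. sm B a (mul B y x) = mul B y (sm B a x) \<and> sm B a (mul B y x) = mul B (sm B a y) x"
    using mul_sm12[OF SA] by blast
  have h5: "\<forall>x\<in>carr B. \<forall>y\<in>carr B. st B (mul B y x) = mul B (st B x) (st B y)"
    using S by blast
  show ?thesis unfolding star_algebra_def opp_simps
    using SA[unfolded star_algebra_def] h1 h2 h3 h4 h5 by (elim conjE) (intro conjI; assumption)
qed

lemma opp_good: "good B \<Longrightarrow> good (opp B)"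
  unfolding good_def using opp_sa by auto


lemma prod_simps[simp]:
  "carr (prod_alg I A) = (\<Pi>\<^sub>E i\<in>I. carr (A i))"
  "zer (prod_alg I A) = (\<lambda>i\<in>I. zer (A i))"
  "ad (prod_alg I A) f g = (\<lambda>i\<in>I. ad (A i) (f i) (g i))"
  "ng (prod_alg I A) f = (\<lambda>i\<in>I. ng (A i) (f i))"
  "sm (prod_alg I A) a f = (\<lambda>i\<in>I. sm (A i) a (f i))"
  "mul (prod_alg I A) f g = (\<lambda>i\<in>I. mul (A i) (f i) (g i))"
  "st (prod_alg I A) f = (\<lambda>i\<in>I. st (A i) (f i))"
  "sn (prod_alg I A) = {(\<lambda>f. p (f i)) | i p. i \<in> I \<and> p \<in> sn (A i)}"
  by (simp_all add: prod_alg_def)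

lemma prod_sub: "i \<in> I \<Longrightarrow> sub (prod_alg I A) f g i = sub (A i) (f i) (g i)"
  by (simp add: sub_def)

lemma prod_opp: "prod_alg I (\<lambda>i. opp (A i)) = opp (prod_alg I A)"
  by (simp add: prod_alg_def opp_def)

definition delta :: "'i set \<Rightarrow> ('i \<Rightarrow> 'a lcalg) \<Rightarrow> 'i \<Rightarrow> 'a \<Rightarrow> ('i \<Rightarrow> 'a)" where
  "delta I A k y = (\<lambda>i\<in>I. if i = k then y else zer (A i))"

context fixes I :: "'i set" and A :: "'i \<Rightarrow> 'a lcalg"
  assumes G: "\<forall>i\<in>I. good (A i)"
begin

lemma SAi: "i \<in> I \<Longrightarrow> star_algebra (A i)" using G by (simp add: good_def)

lemma delta_in: "k \<in> I \<Longrightarrow> y \<in> carr (A k) \<Longrightarrow> delta I A k y \<in> carr (prod_alg I A)"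
  by (auto simp: delta_def intro!: zer_in SAi)

lemma delta_zer: "delta I A k (zer (A k)) = zer (prod_alg I A)"
  by (auto simp: delta_def)

lemma delta_at: "k \<in> I \<Longrightarrow> delta I A k y k = y" by (simp add: delta_def)

lemma mul_delta_l: assumes "s \<in> carr (prod_alg I A)" "k \<in> I" "y \<in> carr (A k)"
  shows "mul (prod_alg I A) (delta I A k y) s = delta I A k (mul (A k) y (s k))"
  using assms SAi mul_zer_l by (fastforce simp: delta_def PiE_iff)

lemma mul_delta_r: assumes "s \<in> carr (prod_alg I A)" "k \<in> I" "y \<in> carr (A k)"
  shows "mul (prod_alg I A) s (delta I A k y) = delta I A k (mul (A k) (s k) y)"
  using assms SAi mul_zer_r by (fastforce simp: delta_def PiE_iff)

lemma prod_zer_in: "zer (prod_alg I A) \<in> carr (prod_alg I A)"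
  by (auto intro!: zer_in SAi)
lemma prod_ad_in: "x \<in> carr (prod_alg I A) \<Longrightarrow> y \<in> carr (prod_alg I A) \<Longrightarrow> ad (prod_alg I A) x y \<in> carr (prod_alg I A)"
  by (auto intro!: ad_in SAi)
lemma prod_mul_in: "x \<in> carr (prod_alg I A) \<Longrightarrow> y \<in> carr (prod_alg I A) \<Longrightarrow> mul (prod_alg I A) x y \<in> carr (prod_alg I A)"
  by (auto intro!: mul_in SAi)
lemma prod_sm_in: "x \<in> carr (prod_alg I A) \<Longrightarrow> sm (prod_alg I A) a x \<in> carr (prod_alg I A)"
  by (auto intro!: sm_in SAi)
lemma prod_mul_zer_r: "s \<in> carr (prod_alg I A) \<Longrightarrow> mul (prod_alg I A) s (zer (prod_alg I A)) = zer (prod_alg I A)"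
  using SAi mul_zer_r by (fastforce simp: PiE_iff)
lemma delta_eq_zer: "k \<in> I \<Longrightarrow> delta I A k y = zer (prod_alg I A) \<Longrightarrow> y = zer (A k)"
  by (metis delta_at prod_simps(2) restrict_apply')
lemma delta_ad: "k \<in> I \<Longrightarrow> x \<in> carr (A k) \<Longrightarrow> y \<in> carr (A k) \<Longrightarrow>
   delta I A k (ad (A k) x y) = ad (prod_alg I A) (delta I A k x) (delta I A k y)"
  using SAi ad_zer zer_in by (fastforce simp: delta_def)
lemma delta_sm: "k \<in> I \<Longrightarrow> delta I A k (sm (A k) a x) = sm (prod_alg I A) a (delta I A k x)"
  using SAi sm_zer by (fastforce simp: delta_def)

lemma ran_carr_comp: "i \<in> I \<Longrightarrow> ran (A i) (carr (A i)) = {zer (A i)}"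
  using G SAi[of i] mul_zer_r[of "A i"] zer_in[of "A i"] st_in[of "A i"]
  by (auto simp: ran_def good_def)

lemma ran_carr_prod: "ran (prod_alg I A) (carr (prod_alg I A)) = {zer (prod_alg I A)}"
proof -
  have "zer (prod_alg I A) \<in> ran (prod_alg I A) (carr (prod_alg I A))"
    using SAi mul_zer_r zer_in by (fastforce simp: ran_def PiE_iff)
  moreover have "x = zer (prod_alg I A)" if x: "x \<in> ran (prod_alg I A) (carr (prod_alg I A))" for x
  proof -
    have xc: "x \<in> carr (prod_alg I A)" using x by (simp add: ran_def)
    have "x k = zer (A k)" if k: "k \<in> I" for k
    proof -
      have xk: "x k \<in> carr (A k)" using xc k by auto
      have stx: "st (A k) (x k) \<in> carr (A k)" using st_in[OF SAi[OF k] xk] .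
      have "delta I A k (st (A k) (x k)) \<in> carr (prod_alg I A)"
        using delta_in[OF k stx] .
      then have "mul (prod_alg I A) (delta I A k (st (A k) (x k))) x = zer (prod_alg I A)"
        using x by (simp add: ran_def)
      then have "delta I A k (mul (A k) (st (A k) (x k)) (x k)) = zer (prod_alg I A)"
        using mul_delta_l[OF xc k stx] by simp
      then have "mul (A k) (st (A k) (x k)) (x k) = zer (A k)"
        using delta_eq_zer[OF k] by blast
      then show ?thesis using G k xk by (simp add: good_def)
    qed
    then show ?thesis using xc by (intro ext) (auto simp: PiE_iff extensional_def)
  qed
  ultimately show ?thesis by blast
qed

end

definition leftann :: "'a lcalg \<Rightarrow> bool" where
  "leftann B \<longleftrightarrow> (\<forall>J. left_ideal B J \<and> sn_closed B J \<longrightarrow> (ran B J = {zer B} \<longleftrightarrow> J = carr B))"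

lemma inj_proj: "inj (\<lambda>p. \<lambda>f::'i\<Rightarrow>'a. (p::'a\<Rightarrow>real) (f k))"
proof (rule injI)
  fix p1 p2 :: "'a \<Rightarrow> real" assume h: "(\<lambda>f::'i\<Rightarrow>'a. p1 (f k)) = (\<lambda>f. p2 (f k))"
  show "p1 = p2"
  proof
    fix a show "p1 a = p2 a" using fun_cong[OF h, of "\<lambda>_. a"] by simp
  qed
qed

context fixes I :: "'i set" and A :: "'i \<Rightarrow> 'a lcalg"
  assumes G: "\<forall>i\<in>I. good (A i)"
begin

lemma pz: "i \<in> I \<Longrightarrow> p \<in> sn (A i) \<Longrightarrow> p (zer (A i)) = 0" using G by (simp add: good_def)

lemma R2L: assumes H: "\<forall>k\<in>I. leftann (A k)" shows "leftann (prod_alg I A)"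
  unfolding leftann_def
proof (intro allI impI)
  let ?P = "prod_alg I A"
  fix J assume J: "left_ideal ?P J \<and> sn_closed ?P J"
  have Jsub: "J \<subseteq> carr ?P" and zJ: "zer ?P \<in> J"
    and adJ: "\<And>x y. x \<in> J \<Longrightarrow> y \<in> J \<Longrightarrow> ad ?P x y \<in> J"
    and smJ: "\<And>a x. x \<in> J \<Longrightarrow> sm ?P a x \<in> J"
    and mulJ: "\<And>a x. a \<in> carr ?P \<Longrightarrow> x \<in> J \<Longrightarrow> mul ?P a x \<in> J"
    using J unfolding left_ideal_def subspace_of_def by blast+
  have clJ: "\<And>x. x \<in> carr ?P \<Longrightarrow> (\<forall>F. finite F \<longrightarrow> F \<subseteq> sn ?P \<longrightarrow> (\<forall>e>0. \<exists>y\<in>J. \<forall>p\<in>F. p (sub ?P x y) < e)) \<Longrightarrow> x \<in> J"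
    using J unfolding sn_closed_def by blast
  show "ran ?P J = {zer ?P} \<longleftrightarrow> J = carr ?P"
  proof
    assume rJ: "ran ?P J = {zer ?P}"
    have dJ: "delta I A k y \<in> J" if k: "k \<in> I" and y: "y \<in> carr (A k)" for k y
    proof -
      have SAk: "star_algebra (A k)" using SAi[OF G k] .
      define Jk where "Jk = {y\<in>carr (A k). delta I A k y \<in> J}"
      have li: "left_ideal (A k) Jk"
        unfolding left_ideal_def subspace_of_def
      proof (intro conjI ballI allI)
        show "Jk \<subseteq> carr (A k)" by (auto simp: Jk_def)
        show "zer (A k) \<in> Jk" using zer_in[OF SAk] zJ by (simp add: Jk_def delta_zer[OF G])
      next
        fix x y assume "x \<in> Jk" "y \<in> Jk"
        then show "ad (A k) x y \<in> Jk" using adJ ad_in[OF SAk] delta_ad[OF G k] by (auto simp: Jk_def)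
      next
        fix a x assume "x \<in> Jk"
        then show "sm (A k) a x \<in> Jk" using smJ sm_in[OF SAk] delta_sm[OF G k] by (auto simp: Jk_def)
      next
        fix a x assume a: "a \<in> carr (A k)" and x: "x \<in> Jk"
        have xc: "x \<in> carr (A k)" and dx: "delta I A k x \<in> J" using x by (auto simp: Jk_def)
        have "mul ?P (delta I A k a) (delta I A k x) = delta I A k (mul (A k) a x)"
          using mul_delta_l[OF G delta_in[OF G k xc] k a] delta_at[OF G k] by simp
        moreover have "mul ?P (delta I A k a) (delta I A k x) \<in> J"
          using mulJ[OF delta_in[OF G k a] dx] .
        ultimately show "mul (A k) a x \<in> Jk" using mul_in[OF SAk a xc] by (simp add: Jk_def)
      qed
      have cl: "sn_closed (A k) Jk"
        unfolding sn_closed_def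
      proof (intro conjI ballI impI)
        show "Jk \<subseteq> carr (A k)" by (auto simp: Jk_def)
        fix z assume z: "z \<in> carr (A k)"
          and ap: "\<forall>F. finite F \<longrightarrow> F \<subseteq> sn (A k) \<longrightarrow> (\<forall>e>0. \<exists>y\<in>Jk. \<forall>p\<in>F. p (sub (A k) z y) < e)"
        have "delta I A k z \<in> J"
        proof (rule clJ[OF delta_in[OF G k z]], intro allI impI)
          fix F and e :: real assume F: "finite F" "F \<subseteq> sn ?P" and e: "e > 0"
          define Gs where "Gs = {p \<in> sn (A k). (\<lambda>f. p (f k)) \<in> F}"
          have "Gs \<subseteq> (\<lambda>p. \<lambda>f. p (f k)) -` F" by (auto simp: Gs_def)
          then have fG: "finite Gs" using finite_vimageI[OF F(1) inj_proj] finite_subset by blast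
          have sG: "Gs \<subseteq> sn (A k)" by (auto simp: Gs_def)
          obtain y' where y': "y' \<in> Jk" and yl: "\<forall>p\<in>Gs. p (sub (A k) z y') < e"
            using ap fG sG e by blast
          have y'c: "y' \<in> carr (A k)" and dy': "delta I A k y' \<in> J" using y' by (auto simp: Jk_def)
          show "\<exists>y\<in>J. \<forall>q\<in>F. q (sub ?P (delta I A k z) y) < e"
          proof (intro bexI[of _ "delta I A k y'"] ballI)
            show "delta I A k y' \<in> J" by (rule dy')
            fix q assume qF: "q \<in> F"
            then have "q \<in> sn ?P" using F by blast
            then obtain i p where qd: "q = (\<lambda>f. p (f i))" and i: "i \<in> I" and p: "p \<in> sn (A i)" by auto
            have qv: "q (sub ?P (delta I A k z) (delta I A k y')) = p (sub (A i) (delta I A k z i) (delta I A k y' i))"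
              using qd prod_sub[OF i, of A] by simp
            show "q (sub ?P (delta I A k z) (delta I A k y')) < e"
            proof (cases "i = k")
              case True
              then have "p \<in> Gs" using qF qd p by (auto simp: Gs_def)
              then show ?thesis using qv yl True delta_at[OF G k] by simp
            next
              case False
              then have "delta I A k z i = zer (A i)" "delta I A k y' i = zer (A i)"
                using i by (auto simp: delta_def)
              then show ?thesis using qv sub_self[OF SAi[OF G i] zer_in[OF SAi[OF G i]]] pz[OF i p] e by simp
            qed
          qed
        qed
        then show "z \<in> Jk" using z by (simp add: Jk_def)
      qed
      have rk: "ran (A k) Jk = {zer (A k)}"
      proof -
        have "zer (A k) \<in> ran (A k) Jk"
          using mul_zer_r[OF SAk] zer_in[OF SAk] by (auto simp: ran_def Jk_def)
        moreover have "z = zer (A k)" if z: "z \<in> ran (A k) Jk" for z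
        proof -
          have zc: "z \<in> carr (A k)" and hz: "\<And>s. s \<in> Jk \<Longrightarrow> mul (A k) s z = zer (A k)"
            using z by (auto simp: ran_def)
          have w0: "mul (A k) (j k) z = zer (A k)" if j: "j \<in> J" for j
          proof -
            have jc: "j \<in> carr ?P" using j Jsub by blast
            have jk: "j k \<in> carr (A k)" using jc k by auto
            define w where "w = mul (A k) (j k) z"
            have wc: "w \<in> carr (A k)" using mul_in[OF SAk jk zc] by (simp add: w_def)
            have aw: "mul (A k) a w = zer (A k)" if a: "a \<in> carr (A k)" for a
            proof -
              have "mul ?P (delta I A k a) j = delta I A k (mul (A k) a (j k))"
                using mul_delta_l[OF G jc k a] .
              moreover have "mul ?P (delta I A k a) j \<in> J" using mulJ[OF delta_in[OF G k a] j] .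
              ultimately have "mul (A k) a (j k) \<in> Jk" using mul_in[OF SAk a jk] by (simp add: Jk_def)
              then have "mul (A k) (mul (A k) a (j k)) z = zer (A k)" by (rule hz)
              then show ?thesis using mul_assoc[OF SAk a jk zc] by (simp add: w_def)
            qed
            have "mul (A k) (st (A k) w) w = zer (A k)" using aw st_in[OF SAk wc] by blast
            then have "w = zer (A k)" using G k wc by (simp add: good_def)
            then show ?thesis by (simp add: w_def)
          qed
          have "delta I A k z \<in> ran ?P J"
          proof -
            have "mul ?P j (delta I A k z) = zer ?P" if j: "j \<in> J" for j
            proof -
              have jc: "j \<in> carr ?P" using j Jsub by blast
              show ?thesis using mul_delta_r[OF G jc k zc] w0[OF j] delta_zer[OF G] by simp
            qed
            then show ?thesis using delta_in[OF G k zc] by (simp add: ran_def)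
          qed
          then have "delta I A k z = zer ?P" using rJ by blast
          then show ?thesis using delta_eq_zer[OF G k] by blast
        qed
        ultimately show ?thesis by blast
      qed
      have "Jk = carr (A k)" using H k li cl rk unfolding leftann_def by blast
      then show ?thesis using y unfolding Jk_def by blast
    qed
    show "J = carr ?P"
    proof
      show "J \<subseteq> carr ?P" by (rule Jsub)
      show "carr ?P \<subseteq> J"
      proof
        fix x assume xc: "x \<in> carr ?P"
        have trunc: "(\<lambda>i\<in>I. if i \<in> S then x i else zer (A i)) \<in> J" if fS: "finite S" for S
          using fS
        proof (induction S rule: finite_induct)
          case empty
          then show ?case using zJ by (simp add: restrict_def)
        next
          case (insert k S)
          show ?case
          proof (cases "k \<in> I")
            case False
            have "(\<lambda>i\<in>I. if i \<in> insert k S then x i else zer (A i)) = (\<lambda>i\<in>I. if i \<in> S then x i else zer (A i))"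
              using False by (intro ext) auto
            then show ?thesis using insert.IH by simp
          next
            case True
            have xk: "x k \<in> carr (A k)" using xc True by auto
            have "(\<lambda>i\<in>I. if i \<in> insert k S then x i else zer (A i)) =
                  ad ?P (\<lambda>i\<in>I. if i \<in> S then x i else zer (A i)) (delta I A k (x k))"
            proof (rule ext)
              fix i show "(\<lambda>i\<in>I. if i \<in> insert k S then x i else zer (A i)) i =
                  ad ?P (\<lambda>i\<in>I. if i \<in> S then x i else zer (A i)) (delta I A k (x k)) i"
              proof (cases "i \<in> I")
                case iI: True
                have SA': "star_algebra (A i)" using SAi[OF G iI] .
                have xi: "x i \<in> carr (A i)" using xc iI by auto
                show ?thesis using iI insert.hyps(2) ad_zer_l[OF SA' xi] ad_zer[OF SA' xi]
                    ad_zer[OF SA' zer_in[OF SA']]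
                  by (auto simp: delta_def)
              qed simp
            qed
            then show ?thesis using adJ[OF insert.IH dJ[OF True xk]] by (simp only:)
          qed
        qed
        show "x \<in> J"
        proof (rule clJ[OF xc], intro allI impI)
          fix F and e :: real assume F: "finite F" "F \<subseteq> sn ?P" and e: "e > 0"
          have "\<forall>q\<in>F. \<exists>ip. q = (\<lambda>f. snd ip (f (fst ip))) \<and> fst ip \<in> I \<and> snd ip \<in> sn (A (fst ip))"
            using F(2) by fastforce
          then obtain c where c: "\<And>q. q \<in> F \<Longrightarrow> q = (\<lambda>f. snd (c q) (f (fst (c q)))) \<and> fst (c q) \<in> I \<and> snd (c q) \<in> sn (A (fst (c q)))"
            by metis
          define S where "S = fst ` c ` F"
          have fS: "finite S" using F(1) by (simp add: S_def)
          show "\<exists>y\<in>J. \<forall>q\<in>F. q (sub ?P x y) < e"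
          proof (intro bexI[OF _ trunc[OF fS]] ballI)
            fix q assume qF: "q \<in> F"
            define i where "i = fst (c q)"
            define p where "p = snd (c q)"
            have qd: "q = (\<lambda>f. p (f i))" and i: "i \<in> I" and p: "p \<in> sn (A i)"
              using c[OF qF] by (auto simp: i_def p_def)
            have iS: "i \<in> S" using qF by (auto simp: S_def i_def)
            have xi: "x i \<in> carr (A i)" using xc i by auto
            have "q (sub ?P x (\<lambda>i\<in>I. if i \<in> S then x i else zer (A i))) = p (sub (A i) (x i) (x i))"
              using qd prod_sub[OF i, of A] iS i by simp
            also have "\<dots> = 0" using sub_self[OF SAi[OF G i] xi] pz[OF i p] by simp
            finally show "q (sub ?P x (\<lambda>i\<in>I. if i \<in> S then x i else zer (A i))) < e" using e by simp
          qed
        qed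
      qed
    qed
  next
    assume "J = carr ?P"
    then show "ran ?P J = {zer ?P}" using ran_carr_prod[OF G] by simp
  qed
qed


lemma L2R: assumes HP: "leftann (prod_alg I A)" and k: "k \<in> I" shows "leftann (A k)"
  unfolding leftann_def
proof (intro allI impI)
  let ?P = "prod_alg I A"
  have SAk: "star_algebra (A k)" using SAi[OF G k] .
  fix Jk assume Jk: "left_ideal (A k) Jk \<and> sn_closed (A k) Jk"
  have Jsub: "Jk \<subseteq> carr (A k)" and zJ: "zer (A k) \<in> Jk"
    and adJ: "\<And>x y. x \<in> Jk \<Longrightarrow> y \<in> Jk \<Longrightarrow> ad (A k) x y \<in> Jk"
    and smJ: "\<And>a x. x \<in> Jk \<Longrightarrow> sm (A k) a x \<in> Jk"
    and mulJ: "\<And>a x. a \<in> carr (A k) \<Longrightarrow> x \<in> Jk \<Longrightarrow> mul (A k) a x \<in> Jk"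
    using Jk unfolding left_ideal_def subspace_of_def by blast+
  have clJ: "\<And>x. x \<in> carr (A k) \<Longrightarrow> (\<forall>F. finite F \<longrightarrow> F \<subseteq> sn (A k) \<longrightarrow> (\<forall>e>0. \<exists>y\<in>Jk. \<forall>p\<in>F. p (sub (A k) x y) < e)) \<Longrightarrow> x \<in> Jk"
    using Jk unfolding sn_closed_def by blast
  show "ran (A k) Jk = {zer (A k)} \<longleftrightarrow> Jk = carr (A k)"
  proof
    assume "Jk = carr (A k)"
    then show "ran (A k) Jk = {zer (A k)}" using ran_carr_comp[OF G k] by simp
  next
    assume rk: "ran (A k) Jk = {zer (A k)}"
    define J where "J = {x \<in> carr ?P. x k \<in> Jk}"
    have li: "left_ideal ?P J"
      unfolding left_ideal_def subspace_of_def
    proof (intro conjI ballI allI)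
      show "J \<subseteq> carr ?P" by (auto simp: J_def)
      show "zer ?P \<in> J" using prod_zer_in[OF G] zJ k by (simp add: J_def)
    next
      fix x y assume "x \<in> J" "y \<in> J"
      then show "ad ?P x y \<in> J" using adJ prod_ad_in[OF G] k by (auto simp: J_def)
    next
      fix a x assume "x \<in> J"
      then show "sm ?P a x \<in> J" using smJ prod_sm_in[OF G] k by (auto simp: J_def)
    next
      fix a x assume "a \<in> carr ?P" "x \<in> J"
      then show "mul ?P a x \<in> J" using mulJ prod_mul_in[OF G] k by (auto simp: J_def)
    qed
    have cl: "sn_closed ?P J"
      unfolding sn_closed_def
    proof (intro conjI ballI impI)
      show "J \<subseteq> carr ?P" by (auto simp: J_def)
      fix x assume xc: "x \<in> carr ?P"
        and ap: "\<forall>F. finite F \<longrightarrow> F \<subseteq> sn ?P \<longrightarrow> (\<forall>e>0. \<exists>y\<in>J. \<forall>p\<in>F. p (sub ?P x y) < e)"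
      have xk: "x k \<in> carr (A k)" using xc k by auto
      have "x k \<in> Jk"
      proof (rule clJ[OF xk], intro allI impI)
        fix Gs and e :: real assume Gs: "finite Gs" "Gs \<subseteq> sn (A k)" and e: "e > 0"
        define F where "F = (\<lambda>p. \<lambda>f. p (f k)) ` Gs"
        have fF: "finite F" using Gs by (simp add: F_def)
        have sF: "F \<subseteq> sn ?P" using Gs k by (auto simp: F_def)
        obtain j where j: "j \<in> J" and jl: "\<forall>q\<in>F. q (sub ?P x j) < e" using ap fF sF e by blast
        show "\<exists>y\<in>Jk. \<forall>p\<in>Gs. p (sub (A k) (x k) y) < e"
        proof (intro bexI[of _ "j k"] ballI)
          show "j k \<in> Jk" using j by (simp add: J_def)
          fix p assume p: "p \<in> Gs"
          have hh: "(\<lambda>f. p (f k)) \<in> F" using p by (simp add: F_def)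
          have "p (sub ?P x j k) < e" using bspec[OF jl hh] by simp
          then show "p (sub (A k) (x k) (j k)) < e" using prod_sub[OF k, of A] by simp
        qed
      qed
      then show "x \<in> J" using xc by (simp add: J_def)
    qed
    have rJ: "ran ?P J = {zer ?P}"
    proof -
      have "zer ?P \<in> ran ?P J"
        using prod_zer_in[OF G] prod_mul_zer_r[OF G] by (auto simp: ran_def J_def)
      moreover have "x = zer ?P" if x: "x \<in> ran ?P J" for x
      proof -
        have xc: "x \<in> carr ?P" and hx: "\<And>s. s \<in> J \<Longrightarrow> mul ?P s x = zer ?P"
          using x by (auto simp: ran_def)
        have "x m = zer (A m)" if m: "m \<in> I" for m
        proof -
          have xm: "x m \<in> carr (A m)" using xc m by auto
          have SAm: "star_algebra (A m)" using SAi[OF G m] .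
          show ?thesis
          proof (cases "m = k")
            case True
            have "x k \<in> ran (A k) Jk"
            proof -
              have "mul (A k) j' (x k) = zer (A k)" if j': "j' \<in> Jk" for j'
              proof -
                have j'c: "j' \<in> carr (A k)" using j' Jsub by blast
                have "delta I A k j' \<in> J" using delta_in[OF G k j'c] delta_at[OF G k] j' by (simp add: J_def)
                then have "mul ?P (delta I A k j') x = zer ?P" by (rule hx)
                then have "delta I A k (mul (A k) j' (x k)) = zer ?P" using mul_delta_l[OF G xc k j'c] by simp
                then show ?thesis using delta_eq_zer[OF G k] by blast
              qed
              then show ?thesis using xc k by (auto simp: ran_def)
            qed
            then show ?thesis using rk True by blast
          next
            case False
            have stx: "st (A m) (x m) \<in> carr (A m)" using st_in[OF SAm xm] .
            have "delta I A m (st (A m) (x m)) k = zer (A k)" using False k by (auto simp: delta_def)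
            then have "delta I A m (st (A m) (x m)) \<in> J" using delta_in[OF G m stx] zJ by (simp add: J_def)
            then have "mul ?P (delta I A m (st (A m) (x m))) x = zer ?P" by (rule hx)
            then have "delta I A m (mul (A m) (st (A m) (x m)) (x m)) = zer ?P" using mul_delta_l[OF G xc m stx] by simp
            then have "mul (A m) (st (A m) (x m)) (x m) = zer (A m)" using delta_eq_zer[OF G m] by blast
            then show ?thesis using G m xm by (simp add: good_def)
          qed
        qed
        then show ?thesis using xc by (intro ext) (auto simp: PiE_iff extensional_def)
      qed
      ultimately show ?thesis by blast
    qed
    have JP: "J = carr ?P" using HP li cl rJ unfolding leftann_def by blast
    show "Jk = carr (A k)"
    proof
      show "Jk \<subseteq> carr (A k)" by (rule Jsub)
      show "carr (A k) \<subseteq> Jk"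
      proof
        fix a assume a: "a \<in> carr (A k)"
        then have "delta I A k a \<in> J" using delta_in[OF G k a] JP by simp
        then show "a \<in> Jk" using delta_at[OF G k] by (simp add: J_def)
      qed
    qed
  qed
qed

lemma left_prod: "leftann (prod_alg I A) \<longleftrightarrow> (\<forall>k\<in>I. leftann (A k))"
  using R2L L2R by blast

end

lemma ann_split: "annihilator_algebra B \<longleftrightarrow> leftann B \<and> leftann (opp B)"
proof -
  have "right_ideal B K = left_ideal (opp B) K" for K
    by (simp add: right_ideal_def left_ideal_def subspace_of_def)
  moreover have "lan B K = ran (opp B) K" for K by (simp add: lan_def ran_def)
  moreover have "sub (opp B) = sub B" by (simp add: sub_def[abs_def])
  moreover have "sn_closed (opp B) K = sn_closed B K" for K
    by (simp add: sn_closed_def sub_def)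
  ultimately show ?thesis unfolding annihilator_algebra_def leftann_def by simp
qed

theorem proposition3p28:
  fixes \<Lambda> :: "'i set" and A :: "'i \<Rightarrow> 'a lcalg"
  assumes "\<forall>\<nu>\<in>\<Lambda>. locally_cstar_algebra (A \<nu>)"
  shows "annihilator_algebra (prod_alg \<Lambda> A) \<longleftrightarrow> (\<forall>\<nu>\<in>\<Lambda>. annihilator_algebra (A \<nu>))"
proof -
  have G: "\<forall>i\<in>\<Lambda>. good (A i)" using assms lc_good by blast
  have G': "\<forall>i\<in>\<Lambda>. good (opp (A i))" using G opp_good by blast
  have "annihilator_algebra (prod_alg \<Lambda> A) \<longleftrightarrow> leftann (prod_alg \<Lambda> A) \<and> leftann (prod_alg \<Lambda> (\<lambda>i. opp (A i)))"
    using ann_split prod_opp by metis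
  also have "\<dots> \<longleftrightarrow> (\<forall>k\<in>\<Lambda>. leftann (A k)) \<and> (\<forall>k\<in>\<Lambda>. leftann (opp (A k)))"
    using left_prod[OF G] left_prod[OF G'] by simp
  also have "\<dots> \<longleftrightarrow> (\<forall>\<nu>\<in>\<Lambda>. annihilator_algebra (A \<nu>))"
    using ann_split by blast
  finally show ?thesis .
qed

end
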